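(* Let $k^2$ be a constant and consider the system $$\rho_t+(\rho u)_x=0,\qquad (\rho u)_t+(\rho u^2)_x=\sigma_x,\qquad \sigma_t+u\sigma_x=k^2u_x.$$ For any integer $p$ there is a solution of this system up to $e^{-p}$ in the sense of $\mathbf{R}\langle\varepsilon\rangle$-distributions of the form $$u=u_0+\Delta u\,U\!\left(\tfrac{x-vt}{\varepsilon}\right),\quad \rho=\rho_0+\Delta\rho\,R\!\left(\tfrac{x-vt}{\varepsilon}\right),\quad \sigma=\sigma_0+\Delta\sigma\,\Sigma\!\left(\tfrac{x-vt}{\varepsilon}\right),$$ where $u_0,\Delta u,\rho_0,\Delta\rho,\sigma_0,\Delta\sigma,v$ are real, $\Delta u,\Delta\rho,\Delta\sigma\neq0$, and $U,R,\Sigma$ are primitives $U(x)=\int_{-\infty}^x\widetilde U$, $R(x)=\int_{-\infty}^x\widetilde R$, $\Sigma(x)=\int_{-\infty}^x\widetilde\Sigma$ of functions $\widetilde U,\widetilde R,\widetilde\Sigma\in\mathcal{S}(\mathbf{R})$ each with total integral $1$; that is, for every $t\in[0,T]$ and every $\psi\in\mathcal{S}(\mathbf{R})$ the integrals $$\int\{\rho_t+\rho_xu+\rho u_x\}\psi\,dx,\quad \int\{\rho_tu+\rho u_t+\rho_xu^2+2\rho uu_x-\sigma_x\}\psi\,dx,\quad \int\{\sigma_t+u\sigma_x-k^2u_x\}\psi\,dx$$ are each of the form $\sum_{k=p}^\infty\zeta_k\varepsilon^k$ in $\mathbf{R}\langle\varepsilon\rangle$. Moreover, $$\rho_0(\Delta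 u)^2(\rho_0+\Delta\rho)+\Delta\sigma\,\Delta\rho=0,\qquad \Delta\sigma\left(\rho_0+\tfrac12\Delta\rho\right)+k^2\Delta\rho=0,\qquad v=u_0+\Delta u+\rho_0\frac{\Delta u}{\Delta\rho}.$$
   Context: $\mathbf{R}\langle\varepsilon\rangle$ is the field of formal Laurent series $\sum_{n\ge 0}\xi_{n+k}\varepsilon^{n+k}$ ($k\in\mathbf{Z}$, $\xi_i\in\mathbf{R}$) with the non-Archimedean norm $|x|_\nu=e^{-\nu(x)}$, where $\nu(x)$ is the lowest exponent with nonzero coefficient. Integrals depending on $\varepsilon\in(0,1]$ are regarded as elements of $\mathbf{R}\langle\varepsilon\rangle$ via their expansions in powers of $\varepsilon$; "up to $e^{-p}$" means these elements only contain powers $\varepsilon^k$ with $k\ge p$. $T>0$ is a fixed time horizon and $\mathcal{S}(\mathbf{R})$ is the Schwartz space. Here $\rho$ is density, $u$ velocity and $\sigma$ stress of a medium. *)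

theory Defs
  imports "HOL-Analysis.Analysis" "HOL-Library.Landau_Symbols"
begin

definition schwartz :: "(real \<Rightarrow> real) \<Rightarrow> bool" where
  "schwartz f \<longleftrightarrow>
     (\<forall>n x. ((deriv ^^ n) f) differentiable (at x)) \<and>
     (\<forall>m n. \<exists>C. \<forall>x. \<bar>x\<bar> ^ m * \<bar>(deriv ^^ n) f x\<bar> \<le> C)"

definition prim :: "(real \<Rightarrow> real) \<Rightarrow> real \<Rightarrow> real" where
  "prim f x = integral {..x} f"

definition pdt :: "(real \<Rightarrow> real \<Rightarrow> real) \<Rightarrow> real \<Rightarrow> real \<Rightarrow> real" where
  "pdt f t x = deriv (\<lambda>s. f s x) t"

definition pdx :: "(real \<Rightarrow> real \<Rightarrow> real) \<Rightarrow> real \<Rightarrow> real \<Rightarrow> real" where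
  "pdx f t x = deriv (\<lambda>y. f t y) x"

text \<open>An epsilon-dependent quantity I, regarded as an element of the Laurent series field
  via its asymptotic expansion in powers of epsilon as epsilon tends to 0+, contains only
  powers epsilon^k with k at least p.\<close>
definition eps_expansion_from :: "int \<Rightarrow> (real \<Rightarrow> real) \<Rightarrow> bool" where
  "eps_expansion_from p I \<longleftrightarrow>
     (\<exists>\<zeta> :: int \<Rightarrow> real. \<forall>N\<ge>p.
        (\<lambda>\<epsilon>. I \<epsilon> - (\<Sum>j\<in>{p..N}. \<zeta> j * \<epsilon> powi j)) \<in> O[at_right 0](\<lambda>\<epsilon>. \<epsilon> powi (N + 1)))"

end

theory Submission
  imports Defs "HOL-Computational_Algebra.Polynomial"
begin

definition cinf :: "(real \<Rightarrow> real) \<Rightarrow> bool" where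
  "cinf f \<longleftrightarrow> (\<forall>n x. (deriv ^^ n) f differentiable (at x))"

definition diffk :: "nat \<Rightarrow> (real \<Rightarrow> real) \<Rightarrow> bool" where
  "diffk n f \<longleftrightarrow> (\<forall>m<n. \<forall>x. (deriv ^^ m) f differentiable (at x))"

lemma cinf_diffk: "cinf f \<longleftrightarrow> (\<forall>n. diffk n f)"
  unfolding cinf_def diffk_def by (meson lessI)

lemma diffk_mono: "diffk n f \<Longrightarrow> m \<le> n \<Longrightarrow> diffk m f"
  unfolding diffk_def by auto

lemma funpow_deriv_Suc: "(deriv ^^ Suc n) f = (deriv ^^ n) (deriv f)"
  by (simp only: funpow_Suc_right o_apply)

lemma diffk_Suc_deriv: "diffk (Suc n) f \<Longrightarrow> diffk n (deriv f)"
  unfolding diffk_def by (metis Suc_mono funpow_deriv_Suc)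

lemma cinf_deriv: "cinf f \<Longrightarrow> cinf (deriv f)"
  unfolding cinf_def by (metis funpow_deriv_Suc)

lemma DERIV_of_diff: "(f::real\<Rightarrow>real) differentiable at x \<Longrightarrow> (f has_real_derivative deriv f x) (at x)"
  by (simp add: DERIV_deriv_iff_real_differentiable)

lemma deriv_lin:
  fixes f g :: "real \<Rightarrow> real"
  assumes "\<forall>x. f differentiable at x" "\<forall>x. g differentiable at x"
  shows "deriv (\<lambda>x. a * f x + b * g x) = (\<lambda>x. a * deriv f x + b * deriv g x)"
proof
  fix x
  have "((\<lambda>x. a * f x + b * g x) has_real_derivative a * deriv f x + b * deriv g x) (at x)"
    using DERIV_of_diff assms by (auto intro!: derivative_eq_intros)
  then show "deriv (\<lambda>x. a * f x + b * g x) x = a * deriv f x + b * deriv g x"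
    by (rule DERIV_imp_deriv)
qed

lemma lin_k:
  "diffk n A \<Longrightarrow> diffk n B \<Longrightarrow>
   (deriv ^^ n) (\<lambda>x. a * A x + b * B x) = (\<lambda>x. a * (deriv ^^ n) A x + b * (deriv ^^ n) B x)"
proof (induction n arbitrary: A B)
  case 0
  then show ?case by simp
next
  case (Suc n)
  have dA: "\<forall>x. A differentiable at x" and dB: "\<forall>x. B differentiable at x"
    using Suc.prems unfolding diffk_def by (metis funpow_0 zero_less_Suc)+
  have "(deriv ^^ Suc n) (\<lambda>x. a * A x + b * B x) = (deriv ^^ n) (\<lambda>x. a * deriv A x + b * deriv B x)"
    by (simp only: funpow_deriv_Suc deriv_lin[OF dA dB])
  also have "\<dots> = (\<lambda>x. a * (deriv ^^ n) (deriv A) x + b * (deriv ^^ n) (deriv B) x)"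
    using Suc.IH Suc.prems diffk_Suc_deriv by blast
  finally show ?case by (simp only: funpow_deriv_Suc)
qed

lemma diffk_lin: "diffk n A \<Longrightarrow> diffk n B \<Longrightarrow> diffk n (\<lambda>x. a * A x + b * B x)"
proof -
  assume A: "diffk n A" and B: "diffk n B"
  show ?thesis unfolding diffk_def
  proof (intro allI impI)
    fix m x assume "m < n"
    then have Am: "diffk m A" and Bm: "diffk m B" using A B diffk_mono by auto
    have "(deriv ^^ m) A differentiable at x" "(deriv ^^ m) B differentiable at x"
      using A B \<open>m < n\<close> unfolding diffk_def by auto
    then show "(deriv ^^ m) (\<lambda>x. a * A x + b * B x) differentiable at x"
      by (simp add: lin_k[OF Am Bm])
  qed
qed

lemma cinf_lin: "cinf A \<Longrightarrow> cinf B \<Longrightarrow> cinf (\<lambda>x. a * A x + b * B x)"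
  by (simp add: cinf_diffk diffk_lin)

lemma cinf_lin_deriv: "cinf A \<Longrightarrow> cinf B \<Longrightarrow>
   (deriv ^^ n) (\<lambda>x. a * A x + b * B x) = (\<lambda>x. a * (deriv ^^ n) A x + b * (deriv ^^ n) B x)"
  by (simp add: cinf_diffk lin_k)

lemma cinf_const: "cinf (\<lambda>x. c)"
proof -
  have "(deriv ^^ n) (\<lambda>x. c) = (if n = 0 then (\<lambda>x. c) else (\<lambda>x. 0))" for n
  proof (induction n)
    case 0 then show ?case by simp
  next
    case (Suc n) then show ?case by (auto simp: funpow_Suc_right)
  qed
  then show ?thesis unfolding cinf_def by auto
qed

lemma deriv_mult_fun:
  fixes f g :: "real \<Rightarrow> real"
  assumes "\<forall>x. f differentiable at x" "\<forall>x. g differentiable at x"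
  shows "deriv (\<lambda>x. f x * g x) = (\<lambda>x. 1 * (deriv f x * g x) + 1 * (f x * deriv g x))"
proof
  fix x
  have "((\<lambda>x. f x * g x) has_real_derivative deriv f x * g x + f x * deriv g x) (at x)"
    using DERIV_of_diff assms by (auto intro!: derivative_eq_intros)
  then show "deriv (\<lambda>x. f x * g x) x = 1 * (deriv f x * g x) + 1 * (f x * deriv g x)"
    by (simp add: DERIV_imp_deriv)
qed

lemma cinf_mult_aux: "\<forall>f g. cinf f \<longrightarrow> cinf g \<longrightarrow> diffk n (\<lambda>x. f x * g x)"
proof (induction n)
  case 0 then show ?case by (simp add: diffk_def)
next
  case (Suc n)
  show ?case
  proof (intro allI impI)
    fix f g assume f: "cinf f" and g: "cinf g"
    have df: "\<forall>x. f differentiable at x" and dg: "\<forall>x. g differentiable at x"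
      using f g unfolding cinf_def by (metis funpow_0)+
    have A: "diffk n (\<lambda>x. deriv f x * g x)" and B: "diffk n (\<lambda>x. f x * deriv g x)"
      using Suc.IH f g cinf_deriv by auto
    show "diffk (Suc n) (\<lambda>x. f x * g x)"
      unfolding diffk_def
    proof (intro allI impI)
      fix m x assume m: "m < Suc n"
      show "(deriv ^^ m) (\<lambda>x. f x * g x) differentiable at x"
      proof (cases m)
        case 0 then show ?thesis using df dg by auto
      next
        case (Suc m')
        then have "m' < n" using m by auto
        have Am: "diffk m' (\<lambda>x. deriv f x * g x)" and Bm: "diffk m' (\<lambda>x. f x * deriv g x)"
          using A B \<open>m' < n\<close> diffk_mono by auto
        have "(deriv ^^ m) (\<lambda>x. f x * g x) =
           (\<lambda>x. 1 * (deriv ^^ m') (\<lambda>x. deriv f x * g x) x + 1 * (deriv ^^ m') (\<lambda>x. f x * deriv g x) x)"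
          unfolding Suc funpow_deriv_Suc deriv_mult_fun[OF df dg] by (rule lin_k[OF Am Bm])
        moreover have "(deriv ^^ m') (\<lambda>x. deriv f x * g x) differentiable at x"
             "(deriv ^^ m') (\<lambda>x. f x * deriv g x) differentiable at x"
          using A B \<open>m' < n\<close> unfolding diffk_def by auto
        ultimately show ?thesis by simp
      qed
    qed
  qed
qed

lemma cinf_mult: "cinf f \<Longrightarrow> cinf g \<Longrightarrow> cinf (\<lambda>x. f x * g x)"
  using cinf_mult_aux cinf_diffk by blast

lemma cinf_affine_deriv:
  assumes "cinf f"
  shows "(deriv ^^ n) (\<lambda>x. f (c * x + d)) = (\<lambda>x. c ^ n * (deriv ^^ n) f (c * x + d))"
proof (induction n)
  case 0 then show ?case by simp
next
  case (Suc n)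
  have "(deriv ^^ Suc n) (\<lambda>x. f (c * x + d)) = deriv (\<lambda>x. c ^ n * (deriv ^^ n) f (c * x + d))"
    using Suc by simp
  also have "\<dots> = (\<lambda>x. c ^ Suc n * (deriv ^^ Suc n) f (c * x + d))"
  proof
    fix x
    have dd: "((deriv ^^ n) f has_real_derivative (deriv ^^ Suc n) f (c * x + d)) (at (c * x + d))"
      using assms unfolding cinf_def by (simp add: DERIV_of_diff)
    have "((\<lambda>x. c ^ n * (deriv ^^ n) f (c * x + d)) has_real_derivative
          c ^ n * ((deriv ^^ Suc n) f (c * x + d) * c)) (at x)"
      by (rule DERIV_cmult, rule DERIV_chain2[where g="\<lambda>x. c * x + d", OF dd]) (auto intro!: derivative_eq_intros)
    then show "deriv (\<lambda>x. c ^ n * (deriv ^^ n) f (c * x + d)) x = c ^ Suc n * (deriv ^^ Suc n) f (c * x + d)"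
      by (simp add: DERIV_imp_deriv mult_ac)
  qed
  finally show ?case .
qed

lemma cinf_affine: "cinf f \<Longrightarrow> cinf (\<lambda>x. f (c * x + d))"
proof -
  assume f: "cinf f"
  show ?thesis unfolding cinf_def
  proof (intro allI)
    fix n x
    have "(deriv ^^ n) f differentiable at (c * x + d)" using f unfolding cinf_def by auto
    then have "(\<lambda>x. c ^ n * (deriv ^^ n) f (c * x + d)) differentiable at x"
      by (auto intro!: derivative_intros differentiable_compose[of "(deriv ^^ n) f"])
    then show "(deriv ^^ n) (\<lambda>x. f (c * x + d)) differentiable at x"
      by (simp add: cinf_affine_deriv[OF f])
  qed
qed

definition hP :: "real poly \<Rightarrow> real \<Rightarrow> real" where
  "hP P x = (if x > 0 then poly P (1/x) * exp (-1/x) else 0)"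

definition nextP :: "real poly \<Rightarrow> real poly" where
  "nextP P = [:0,0,1:] * (P - pderiv P)"

lemma poly_exp_lim: "((\<lambda>z::real. poly (Q::real poly) z * exp (-z)) \<longlongrightarrow> 0) at_top"
proof -
  have eq: "poly Q z * exp (-z) = (\<Sum>i\<le>degree Q. coeff Q i * (z ^ i / exp z))" for z
    by (simp add: poly_altdef sum_distrib_left sum_distrib_right exp_minus divide_inverse mult_ac)
  have "((\<lambda>z. \<Sum>i\<le>degree Q. coeff Q i * (z ^ i / exp z)) \<longlongrightarrow> (\<Sum>i\<le>degree Q. coeff Q i * 0)) at_top"
    by (intro tendsto_sum tendsto_mult tendsto_const tendsto_power_div_exp_0)
  then show ?thesis by (simp add: eq)
qed

lemma hP_lim0: "((\<lambda>y. hP P y / y) \<longlongrightarrow> 0) (at_right 0)"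
proof -
  have "((\<lambda>y. poly (pCons 0 P) (inverse y) * exp (- inverse y)) \<longlongrightarrow> 0) (at_right 0)"
    using filterlim_compose[OF poly_exp_lim[of "pCons 0 P"] filterlim_inverse_at_top_right] by (simp del: poly_pCons)
  moreover have "eventually (\<lambda>y. poly (pCons 0 P) (inverse y) * exp (- inverse y) = hP P y / y) (at_right 0)"
    unfolding eventually_at_right_field
    by (rule exI[of _ 1]) (auto simp: hP_def field_simps)
  ultimately show ?thesis by (rule Lim_transform_eventually)
qed

lemma hP_deriv: "(hP P has_real_derivative hP (nextP P) x) (at x)"
proof (cases "x > 0")
  case True
  let ?g = "\<lambda>y. poly P (1/y) * exp (-1/y)"
  have "(?g has_real_derivative poly (pderiv P) (1/x) * (- 1 / x^2) * exp (-1/x) + poly P (1/x) * (exp (-1/x) * (1/x^2))) (at x)"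
    using True
    by (auto intro!: derivative_eq_intros DERIV_chain2[OF poly_DERIV] simp: power2_eq_square field_simps)
  moreover have "poly (pderiv P) (1/x) * (- 1 / x^2) * exp (-1/x) + poly P (1/x) * (exp (-1/x) * (1/x^2)) = hP (nextP P) x"
    using True by (simp add: hP_def nextP_def algebra_simps power2_eq_square)
  ultimately have "(?g has_real_derivative hP (nextP P) x) (at x)" by simp
  then show ?thesis
    by (rule has_field_derivative_transform_within_open[where S="{0<..}"]) (use True in \<open>auto simp: hP_def\<close>)
next
  case False
  show ?thesis
  proof (cases "x < 0")
    case True
    have "((\<lambda>y. 0) has_real_derivative 0) (at x)" by simp
    then have "(hP P has_real_derivative 0) (at x)"
      by (rule has_field_derivative_transform_within_open[where S="{..<0}"]) (use True in \<open>auto simp: hP_def\<close>)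
    then show ?thesis using True by (simp add: hP_def)
  next
    case False
    then have x0: "x = 0" using \<open>\<not> x > 0\<close> by auto
    have "((\<lambda>y. (hP P y - hP P 0) / (y - 0)) \<longlongrightarrow> 0) (at 0)"
      unfolding filterlim_at_split
    proof
      have "eventually (\<lambda>y. 0 = (hP P y - hP P 0) / (y - 0)) (at_left (0::real))"
        unfolding eventually_at_left_field by (rule exI[of _ "-1"]) (auto simp: hP_def)
      then show "((\<lambda>y. (hP P y - hP P 0) / (y - 0)) \<longlongrightarrow> 0) (at_left 0)"
        by (rule Lim_transform_eventually[OF tendsto_const])
    next
      show "((\<lambda>y. (hP P y - hP P 0) / (y - 0)) \<longlongrightarrow> 0) (at_right 0)"
        using hP_lim0[of P] by (simp add: hP_def)
    qed
    then show ?thesis using x0 by (simp add: has_field_derivative_iff hP_def)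
  qed
qed

lemma deriv_hP: "deriv (hP P) = hP (nextP P)"
  by (rule ext, rule DERIV_imp_deriv, rule hP_deriv)

lemma cinf_hP: "cinf (hP P)"
proof -
  have "\<forall>P. (deriv ^^ n) (hP P) = hP ((nextP ^^ n) P)" for n
    by (induction n) (auto simp: deriv_hP)
  then show ?thesis unfolding cinf_def
    using hP_deriv real_differentiable_def by metis
qed

definition bump0 :: "real \<Rightarrow> real" where
  "bump0 x = hP 1 x * hP 1 (1 - x)"

lemma cinf_bump0: "cinf bump0"
proof -
  have "cinf (\<lambda>x. hP 1 ((-1) * x + 1))" by (rule cinf_affine[OF cinf_hP])
  then have "cinf (\<lambda>x. hP 1 x * hP 1 ((-1) * x + 1))" by (rule cinf_mult[OF cinf_hP])
  then show ?thesis unfolding bump0_def[abs_def] by simp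
qed

lemma bump0_supp: "x \<notin> {0..1} \<Longrightarrow> bump0 x = 0"
  by (auto simp: bump0_def hP_def)

lemma bump0_nonneg: "bump0 x \<ge> 0"
  by (auto simp: bump0_def hP_def)

lemma bump0_pos: "bump0 (1/2) > 0"
  by (simp add: bump0_def hP_def)

definition csupp :: "(real \<Rightarrow> real) \<Rightarrow> real \<Rightarrow> real \<Rightarrow> bool" where
  "csupp f c d \<longleftrightarrow> (\<forall>x. x \<notin> {c..d} \<longrightarrow> f x = 0)"

lemma cinf_cont: "cinf f \<Longrightarrow> continuous_on S f"
  unfolding cinf_def
  by (metis continuous_at_imp_continuous_on differentiable_imp_continuous_within funpow_0)

lemma cinf_cont_deriv: "cinf f \<Longrightarrow> continuous_on S ((deriv ^^ n) f)"
  unfolding cinf_def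
  by (metis continuous_at_imp_continuous_on differentiable_imp_continuous_within)

lemma csupp_deriv:
  assumes "csupp f c d" "x \<notin> {c..d}"
  shows "(deriv ^^ n) f x = 0"
  using assms(2)
proof (induction n arbitrary: x)
  case 0 then show ?case using assms(1) by (simp add: csupp_def)
next
  case (Suc n)
  have "((\<lambda>y. 0) has_real_derivative 0) (at x)" by simp
  then have "((deriv ^^ n) f has_real_derivative 0) (at x)"
    by (rule has_field_derivative_transform_within_open[where S="- {c..d}"]) (use Suc in auto)
  then show ?case by (simp add: DERIV_imp_deriv)
qed

lemma cont_bounded_on_interval:
  fixes h :: "real \<Rightarrow> real"
  assumes "continuous_on {c..d} h"
  shows "\<exists>B. \<forall>x\<in>{c..d}. \<bar>h x\<bar> \<le> B"
proof -
  have "bounded (h ` {c..d})" by (rule compact_imp_bounded[OF compact_continuous_image[OF assms]]) simp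
  then obtain B where "\<forall>y\<in>h ` {c..d}. norm y \<le> B" by (auto simp: bounded_iff)
  then show ?thesis by auto
qed

lemma good_schwartz:
  assumes "cinf f" "csupp f c d"
  shows "schwartz f"
  unfolding schwartz_def
proof (intro conjI allI)
  fix n x show "(deriv ^^ n) f differentiable at x" using assms(1) by (simp add: cinf_def)
next
  fix m n
  have "continuous_on {c..d} (\<lambda>x. \<bar>x\<bar> ^ m * \<bar>(deriv ^^ n) f x\<bar>)"
    using cinf_cont_deriv[OF assms(1)] by (intro continuous_intros) auto
  then obtain B where B: "\<forall>x\<in>{c..d}. \<bar>\<bar>x\<bar> ^ m * \<bar>(deriv ^^ n) f x\<bar>\<bar> \<le> B"
    using cont_bounded_on_interval by blast
  show "\<exists>C. \<forall>x. \<bar>x\<bar> ^ m * \<bar>(deriv ^^ n) f x\<bar> \<le> C"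
  proof (rule exI[of _ "max B 0"], intro allI)
    fix x show "\<bar>x\<bar> ^ m * \<bar>(deriv ^^ n) f x\<bar> \<le> max B 0"
      using B csupp_deriv[OF assms(2), of x n] by (cases "x \<in> {c..d}") force+
  qed
qed

lemma csupp_lin: "csupp f c d \<Longrightarrow> csupp g c' d' \<Longrightarrow> csupp (\<lambda>x. a * f x + b * g x) (min c c') (max d d')"
proof -
  assume f: "csupp f c d" and g: "csupp g c' d'"
  show ?thesis unfolding csupp_def
  proof (intro allI impI)
    fix x assume "x \<notin> {min c c'..max d d'}"
    then have "x \<notin> {c..d}" "x \<notin> {c'..d'}" by auto
    then show "a * f x + b * g x = 0" using f g by (simp add: csupp_def)
  qed
qed

lemma csupp_shift: "csupp f c d \<Longrightarrow> csupp (\<lambda>x. f (x - s)) (c + s) (d + s)"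
  unfolding csupp_def by auto

lemma csupp_mono: "csupp f c d \<Longrightarrow> c' \<le> c \<Longrightarrow> d \<le> d' \<Longrightarrow> csupp f c' d'"
  unfolding csupp_def by auto

lemma cinf_shift: "cinf f \<Longrightarrow> cinf (\<lambda>x. f (x - s))"
  using cinf_affine[of f 1 "-s"] by simp

lemma cinf_sum: "finite I \<Longrightarrow> (\<And>i. i \<in> I \<Longrightarrow> cinf (f i)) \<Longrightarrow> cinf (\<lambda>x. \<Sum>i\<in>I. f i x)"
proof (induction I rule: finite_induct)
  case empty then show ?case using cinf_const[of 0] by simp
next
  case (insert i I)
  then have "cinf (\<lambda>x. 1 * f i x + 1 * (\<Sum>i\<in>I. f i x))" by (intro cinf_lin) auto
  then show ?case using insert by simp
qed

lemma csupp_sum: "(\<And>i. i \<in> I \<Longrightarrow> csupp (f i) c d) \<Longrightarrow> csupp (\<lambda>x. \<Sum>i\<in>I. f i x) c d"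
  unfolding csupp_def by auto

text \<open>Integrals of continuous compactly supported functions\<close>

lemma csupp_has_integral_superset:
  fixes f :: "real \<Rightarrow> real"
  assumes "continuous_on UNIV f" "\<And>x. x \<notin> {a..b} \<Longrightarrow> f x = 0" "{a..b} \<subseteq> S"
  shows "(f has_integral integral {a..b} f) S"
proof -
  have "f integrable_on {a..b}"
    by (rule integrable_continuous_interval) (rule continuous_on_subset[OF assms(1)], simp)
  then show ?thesis using has_integral_on_superset assms(2,3) by blast
qed

lemma csupp_int_univ:
  fixes f :: "real \<Rightarrow> real"
  assumes "continuous_on UNIV f" "csupp f c d"
  shows "(f has_integral integral {c..d} f) UNIV" "integral UNIV f = integral {c..d} f"
  using csupp_has_integral_superset[OF assms(1), of c d UNIV] assms(2)
  by (auto simp: csupp_def integral_unique)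

lemma prim_int:
  assumes "continuous_on UNIV f" "\<And>y. y < a \<Longrightarrow> f y = 0" "a \<le> x"
  shows "prim f x = integral {a..x} f"
proof -
  let ?F = "\<lambda>y. if y \<in> {..x} then f y else 0"
  have fi: "f integrable_on {a..x}"
    by (rule integrable_continuous_interval) (rule continuous_on_subset[OF assms(1)], simp)
  then have "(f has_integral integral {a..x} f) {a..x}" by (rule integrable_integral)
  then have "(?F has_integral integral {a..x} f) {a..x}"
    by (rule has_integral_eq[rotated]) auto
  then have "(?F has_integral integral {a..x} f) UNIV"
    by (rule has_integral_on_superset) (use assms(2) in auto)
  then have "(f has_integral integral {a..x} f) {..x}"
    by (rule has_integral_restrict_UNIV[THEN iffD1])
  then show ?thesis unfolding prim_def by (rule integral_unique)
qed

lemma prim_zero: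
  assumes "continuous_on UNIV f" "\<And>y. y < a \<Longrightarrow> f y = 0" "x \<le> a"
  shows "prim f x = 0"
proof -
  have "prim f x = integral {x..x} f" by (rule prim_int[OF assms(1)]) (use assms in auto)
  then show ?thesis by simp
qed

lemma prim_top:
  assumes "continuous_on UNIV f" "csupp f c d" "d \<le> x"
  shows "prim f x = integral UNIV f"
proof -
  have "((\<lambda>y. if y \<in> {..x} then f y else 0) has_integral integral {c..d} f) UNIV"
  proof -
    have "(\<lambda>y. if y \<in> {..x} then f y else 0) = f"
    proof
      fix y show "(if y \<in> {..x} then f y else 0) = f y"
      proof (cases "y \<le> x")
        case False
        then have "y \<notin> {c..d}" using assms(3) by auto
        then show ?thesis using assms(2) False unfolding csupp_def by auto
      qed simp
    qed
    then show ?thesis using csupp_int_univ[OF assms(1,2)] by simp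
  qed
  then have "(f has_integral integral {c..d} f) {..x}" by (rule has_integral_restrict_UNIV[THEN iffD1])
  then show ?thesis unfolding prim_def using csupp_int_univ[OF assms(1,2)]
    by (simp add: integral_unique)
qed

lemma prim_deriv:
  assumes "continuous_on UNIV f" "\<And>y. y < a \<Longrightarrow> f y = 0"
  shows "(prim f has_real_derivative f x) (at x)"
proof -
  define a' where "a' = min a x - 1"
  have a'_lt: "a' < x" "a' \<le> a" by (auto simp: a'_def)
  have c: "continuous_on {a'..x+1} f" by (rule continuous_on_subset[OF assms(1)]) simp
  have xi: "x \<in> {a'..x+1}" using a'_lt by simp
  have "((\<lambda>y. integral {a'..y} f) has_real_derivative f x) (at x within {a'..x+1})"
    by (rule integral_has_real_derivative[OF c xi])
  moreover have "x \<in> interior {a'..x+1}" using a'_lt by simp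
  ultimately have "((\<lambda>y. integral {a'..y} f) has_real_derivative f x) (at x)"
    by (simp only: at_within_interior)
  then show ?thesis
  proof (rule has_field_derivative_transform_within_open[where S="{a'<..}"])
    show "open {a'<..}" by simp
    show "x \<in> {a'<..}" using a'_lt by simp
    fix y assume "y \<in> {a'<..}"
    then have "a' \<le> y" by simp
    have "\<And>z. z < a' \<Longrightarrow> f z = 0" using assms(2) a'_lt by simp
    then show "integral {a'..y} f = prim f y"
      using prim_int[OF assms(1), of a' y] \<open>a' \<le> y\<close> by simp
  qed
qed

lemma eps_cong:
  assumes "eventually (\<lambda>e. f e = g e) (at_right 0)" "eps_expansion_from p f"
  shows "eps_expansion_from p g"
proof -
  obtain z :: "int \<Rightarrow> real" where z: "\<forall>N\<ge>p.
        (\<lambda>e. f e - (\<Sum>j\<in>{p..N}. z j * e powi j)) \<in> O[at_right 0](\<lambda>e. e powi (N + 1))"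
    using assms(2) unfolding eps_expansion_from_def by blast
  have "\<forall>N\<ge>p. (\<lambda>e. g e - (\<Sum>j\<in>{p..N}. z j * e powi j)) \<in> O[at_right 0](\<lambda>e. e powi (N + 1))"
  proof (intro allI impI)
    fix N :: int assume "N \<ge> p"
    have ev: "eventually (\<lambda>e. f e - (\<Sum>j\<in>{p..N}. z j * e powi j) = g e - (\<Sum>j\<in>{p..N}. z j * e powi j)) (at_right 0)"
      using assms(1) by (rule eventually_mono) simp
    have zN: "(\<lambda>e. f e - (\<Sum>j\<in>{p..N}. z j * e powi j)) \<in> O[at_right 0](\<lambda>e. e powi (N + 1))"
      using z \<open>N \<ge> p\<close> by blast
    show "(\<lambda>e. g e - (\<Sum>j\<in>{p..N}. z j * e powi j)) \<in> O[at_right 0](\<lambda>e. e powi (N + 1))"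
      by (rule landau_o.big.in_cong[OF ev, THEN iffD1, OF zN])
  qed
  then show ?thesis unfolding eps_expansion_from_def by blast
qed

lemma schwartz_DERIV:
  "schwartz \<psi> \<Longrightarrow> ((deriv ^^ m) \<psi> has_real_derivative (deriv ^^ Suc m) \<psi> x) (at x)"
  unfolding schwartz_def by (simp add: DERIV_of_diff)

lemma schwartz_bound: "schwartz \<psi> \<Longrightarrow> \<exists>C. \<forall>x. \<bar>(deriv ^^ m) \<psi> x\<bar> \<le> C"
  unfolding schwartz_def by (metis mult_1 power_0)

lemma schwartz_cont: "schwartz \<psi> \<Longrightarrow> continuous_on S \<psi>"
  unfolding schwartz_def
  by (metis continuous_at_imp_continuous_on differentiable_imp_continuous_within funpow_0)

lemma taylor_bound:
  assumes "schwartz \<psi>"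
  shows "\<exists>C. \<forall>z. \<bar>\<psi> (a + z) - (\<Sum>m<K. (deriv ^^ m) \<psi> a / fact m * z ^ m)\<bar> \<le> C * \<bar>z\<bar> ^ K"
proof -
  obtain C where C: "\<forall>x. \<bar>(deriv ^^ K) \<psi> x\<bar> \<le> C" using schwartz_bound[OF assms] by blast
  show ?thesis
  proof (rule exI[of _ "C / fact K"], intro allI)
    fix z
    let ?diff = "\<lambda>m z. (deriv ^^ m) \<psi> (a + z)"
    have d: "\<forall>m z. (?diff m has_real_derivative ?diff (Suc m) z) (at z)"
    proof (intro allI)
      fix m z
      have g: "((\<lambda>z. a + z) has_real_derivative 1) (at z)" by (auto intro!: derivative_eq_intros)
      show "(?diff m has_real_derivative ?diff (Suc m) z) (at z)"
        using DERIV_chain2[where g="\<lambda>z. a + z", OF schwartz_DERIV[OF assms, of m "a + z"] g]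
        by simp
    qed
    obtain t where t: "\<psi> (a + z) = (\<Sum>m<K. ?diff m 0 / fact m * z ^ m) + ?diff K t / fact K * z ^ K"
      using Maclaurin_all_le[of ?diff "\<lambda>z. \<psi> (a + z)", OF _ d, of z K] by auto
    have "\<bar>?diff K t / fact K * z ^ K\<bar> = \<bar>?diff K t\<bar> / fact K * \<bar>z\<bar> ^ K"
      by (simp add: abs_mult power_abs)
    also have "\<dots> \<le> C / fact K * \<bar>z\<bar> ^ K"
      by (intro mult_right_mono divide_right_mono) (use C in auto)
    finally have "\<bar>?diff K t / fact K * z ^ K\<bar> \<le> C / fact K * \<bar>z\<bar> ^ K" .
    then show "\<bar>\<psi> (a + z) - (\<Sum>m<K. (deriv ^^ m) \<psi> a / fact m * z ^ m)\<bar> \<le> C / fact K * \<bar>z\<bar> ^ K"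
      using t by simp
  qed
qed


lemma powi_ge1: "0 < (e::real) \<Longrightarrow> e \<le> 1 \<Longrightarrow> (k::int) \<le> 0 \<Longrightarrow> e powi k \<ge> 1"
proof -
  assume a: "0 < e" "e \<le> 1" "k \<le> 0"
  have "1 \<le> inverse e" by (rule one_le_inverse) (use a in auto)
  then have "1 \<le> inverse e ^ nat (- k)" by (rule one_le_power)
  then show ?thesis using a by (simp add: power_int_def)
qed

lemma expansion:
  fixes G \<psi> :: "real \<Rightarrow> real"
  assumes G: "continuous_on UNIV G"
    and mom: "\<forall>j<n. integral {c..d} (\<lambda>y. G y * y ^ j) = 0"
    and pn: "p \<le> int n" and psi: "schwartz \<psi>"
  shows "eps_expansion_from p (\<lambda>e. integral {c..d} (\<lambda>y. G y * \<psi> (a + e * y)))"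
proof -
  define M where "M j = integral {c..d} (\<lambda>y. G y * y ^ j)" for j
  define D where "D j = (deriv ^^ j) \<psi> a" for j
  define z where "z j = (if 0 \<le> j then D (nat j) / fact (nat j) * M (nat j) else 0)" for j :: int
  define I where "I e = integral {c..d} (\<lambda>y. G y * \<psi> (a + e * y))" for e
  have z0: "z j = 0" if "j < p" for j
  proof (cases "0 \<le> j")
    case True
    then have "nat j < n" using that pn by linarith
    then show ?thesis using mom by (simp add: z_def M_def)
  qed (simp add: z_def)
  have psic: "continuous_on S \<psi>" for S using schwartz_cont[OF psi] .
  have Gc: "continuous_on S G" for S using continuous_on_subset[OF G] by blast
  have intc: "f integrable_on {c..d}" if "continuous_on UNIV f" for f :: "real \<Rightarrow> real"
    by (rule integrable_continuous_interval, rule continuous_on_subset[OF that]) simp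
  have intI: "(\<lambda>y. G y * \<psi> (a + e * y)) integrable_on {c..d}" for e
    by (rule intc) (intro continuous_intros Gc continuous_on_compose2[OF psic]; auto)
  have "\<forall>N\<ge>p. (\<lambda>e. I e - (\<Sum>j\<in>{p..N}. z j * e powi j)) \<in> O[at_right 0](\<lambda>e. e powi (N + 1))"
  proof (intro allI impI)
    fix N assume "N \<ge> p"
    show "(\<lambda>e. I e - (\<Sum>j\<in>{p..N}. z j * e powi j)) \<in> O[at_right 0](\<lambda>e. e powi (N + 1))"
    proof (cases "N < 0")
      case True
      have sum0: "(\<Sum>j\<in>{p..N}. z j * e powi j) = 0" for e
        by (rule sum.neutral) (use True z_def in auto)
      obtain C0 where C0: "\<forall>x. \<bar>\<psi> x\<bar> \<le> C0" using schwartz_bound[OF psi, of 0] by auto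
      define B where "B = integral {c..d} (\<lambda>y. \<bar>G y\<bar> * C0)"
      have bI: "\<bar>I e\<bar> \<le> B" for e
      proof -
        have "norm (I e) \<le> integral {c..d} (\<lambda>y. \<bar>G y\<bar> * C0)"
          unfolding I_def
        proof (rule integral_norm_bound_integral[OF intI])
          show "(\<lambda>y. \<bar>G y\<bar> * C0) integrable_on {c..d}"
            by (rule intc) (intro continuous_intros Gc)
          fix y show "norm (G y * \<psi> (a + e * y)) \<le> \<bar>G y\<bar> * C0"
            using C0 by (simp add: abs_mult mult_left_mono)
        qed
        then show ?thesis by (simp add: B_def)
      qed
      have "eventually (\<lambda>e. norm (I e - (\<Sum>j\<in>{p..N}. z j * e powi j)) \<le> B * norm (e powi (N + 1))) (at_right 0)"
      proof (rule eventually_at_rightI[where b=1])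
        fix e :: real assume "e \<in> {0<..<1}"
        then have e: "0 < e \<and> e < 1" by simp
        have "B \<ge> 0" using bI[of 0] by linarith
        moreover have "e powi (N + 1) \<ge> 1" using e True by (intro powi_ge1) auto
        ultimately have "B \<le> B * norm (e powi (N + 1))" 
          by (simp add: mult_le_cancel_left1)
        then show "norm (I e - (\<Sum>j\<in>{p..N}. z j * e powi j)) \<le> B * norm (e powi (N + 1))"
          using bI[of e] sum0[of e] by simp
      qed simp
      then show ?thesis by (rule bigoI)
    next
      case False
      define K where "K = nat N"
      have NK: "N = int K" using False K_def by simp
      have sumeq: "(\<Sum>j\<in>{p..N}. z j * e powi j) = (\<Sum>k<Suc K. D k / fact k * M k * e ^ k)" for e
      proof -
        have "(\<Sum>j\<in>{p..N}. z j * e powi j) = (\<Sum>j\<in>{min p 0..N}. z j * e powi j)"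
          by (rule sum.mono_neutral_left) (use z0 in auto)
        also have "\<dots> = (\<Sum>j\<in>{0..N}. z j * e powi j)"
          by (rule sum.mono_neutral_right) (auto simp: z_def)
        also have "\<dots> = (\<Sum>k\<in>{0..K}. z (int k) * e powi (int k))"
          using sum.atLeast_int_atMost_int_shift[of "\<lambda>j. z j * e powi j" 0 K] NK by (simp add: o_def)
        also have "\<dots> = (\<Sum>k<Suc K. D k / fact k * M k * e ^ k)"
          by (simp add: z_def power_int_of_nat atLeast0AtMost lessThan_Suc_atMost)
        finally show ?thesis .
      qed
      obtain C where C: "\<forall>w. \<bar>\<psi> (a + w) - (\<Sum>m<Suc K. D m / fact m * w ^ m)\<bar> \<le> C * \<bar>w\<bar> ^ Suc K"
        using taylor_bound[OF psi, of a "Suc K"] unfolding D_def by blast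
      define B where "B = C * integral {c..d} (\<lambda>y. \<bar>G y\<bar> * \<bar>y\<bar> ^ Suc K)"
      have main: "\<bar>I e - (\<Sum>k<Suc K. D k / fact k * M k * e ^ k)\<bar> \<le> B * e ^ Suc K" if "e > 0" for e
      proof -
        let ?R = "\<lambda>y. \<psi> (a + e * y) - (\<Sum>m<Suc K. D m / fact m * (e * y) ^ m)"
        have intk: "(\<lambda>y. D k / fact k * e ^ k * (G y * y ^ k)) integrable_on {c..d}" for k
          by (rule intc) (intro continuous_intros Gc)
        have "(\<Sum>k<Suc K. D k / fact k * M k * e ^ k) = (\<Sum>k<Suc K. (D k / fact k * e ^ k) * M k)"
          by (simp add: mult_ac)
        also have "\<dots> = (\<Sum>k<Suc K. integral {c..d} (\<lambda>y. D k / fact k * e ^ k * (G y * y ^ k)))"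
          by (simp only: M_def integral_mult_right)
        also have "\<dots> = integral {c..d} (\<lambda>y. \<Sum>k<Suc K. D k / fact k * e ^ k * (G y * y ^ k))"
          by (rule integral_sum[symmetric]) (use intk in auto)
        finally have s1: "(\<Sum>k<Suc K. D k / fact k * M k * e ^ k) = integral {c..d} (\<lambda>y. \<Sum>k<Suc K. D k / fact k * e ^ k * (G y * y ^ k))" .
        have intS: "(\<lambda>y. \<Sum>k<Suc K. D k / fact k * e ^ k * (G y * y ^ k)) integrable_on {c..d}"
          by (rule integrable_sum) (use intk in auto)
        have "I e - (\<Sum>k<Suc K. D k / fact k * M k * e ^ k) = integral {c..d} (\<lambda>y. G y * \<psi> (a + e * y) - (\<Sum>k<Suc K. D k / fact k * e ^ k * (G y * y ^ k)))"
          unfolding s1 I_def by (rule integral_diff[symmetric, OF intI intS])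
        also have "\<dots> = integral {c..d} (\<lambda>y. G y * ?R y)"
          by (rule integral_cong) (simp add: algebra_simps sum_distrib_left power_mult_distrib)
        finally have eq: "I e - (\<Sum>k<Suc K. D k / fact k * M k * e ^ k) = integral {c..d} (\<lambda>y. G y * ?R y)" .
        have intR: "(\<lambda>y. G y * ?R y) integrable_on {c..d}"
          by (rule intc) (intro continuous_intros Gc continuous_on_compose2[OF psic]; auto)
        have intB: "(\<lambda>y. e ^ Suc K * (C * (\<bar>G y\<bar> * \<bar>y\<bar> ^ Suc K))) integrable_on {c..d}"
          by (rule intc) (intro continuous_intros Gc)
        have "norm (integral {c..d} (\<lambda>y. G y * ?R y)) \<le> integral {c..d} (\<lambda>y. e ^ Suc K * (C * (\<bar>G y\<bar> * \<bar>y\<bar> ^ Suc K)))"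
        proof (rule integral_norm_bound_integral[OF intR intB])
          fix y
          have "\<bar>?R y\<bar> \<le> C * \<bar>e * y\<bar> ^ Suc K" using C[rule_format, of "e * y"] by simp
          then have "\<bar>G y\<bar> * \<bar>?R y\<bar> \<le> \<bar>G y\<bar> * (C * \<bar>e * y\<bar> ^ Suc K)"
            by (rule mult_left_mono) simp
          then show "norm (G y * ?R y) \<le> e ^ Suc K * (C * (\<bar>G y\<bar> * \<bar>y\<bar> ^ Suc K))"
            using that by (simp add: abs_mult power_mult_distrib mult_ac)
        qed
        also have "\<dots> = e ^ Suc K * C * integral {c..d} (\<lambda>y. \<bar>G y\<bar> * \<bar>y\<bar> ^ Suc K)"
          by (simp only: integral_mult_right mult.assoc)
        also have "\<dots> = B * e ^ Suc K"
          by (simp add: B_def mult_ac)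
        finally show ?thesis using eq by simp
      qed
      have "eventually (\<lambda>e. norm (I e - (\<Sum>j\<in>{p..N}. z j * e powi j)) \<le> B * norm (e powi (N + 1))) (at_right 0)"
      proof (rule eventually_at_rightI[where b=1])
        fix e :: real assume "e \<in> {0<..<1}"
        then have e: "0 < e \<and> e < 1" by simp
        have "N + 1 = int (Suc K)" using NK by simp
        then have "e powi (N + 1) = e ^ Suc K" by (simp only: power_int_of_nat)
        then show "norm (I e - (\<Sum>j\<in>{p..N}. z j * e powi j)) \<le> B * norm (e powi (N + 1))"
          using main[of e] e sumeq[of e] by simp
      qed simp
      then show ?thesis by (rule bigoI)
    qed
  qed
  then show ?thesis unfolding eps_expansion_from_def I_def by blast
qed

lemma aff_int:
  fixes H :: "real \<Rightarrow> real"
  assumes H: "continuous_on UNIV H" and s: "csupp H c d" and e: "e > 0"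
  shows "((\<lambda>x. H ((x - a) / e)) has_integral (e * integral {c..d} H)) UNIV"
proof -
  have "(H has_integral integral {c..d} H) (cbox c d)"
    using integrable_continuous_interval[OF continuous_on_subset[OF H]] by (simp add: integrable_integral)
  from has_integral_affinity'[OF this, of "1/e" "-a/e"] e
  have h: "((\<lambda>x. H ((1/e) *\<^sub>R x + - a / e)) has_integral integral {c..d} H /\<^sub>R (1/e) ^ DIM(real))
     (cbox ((c - - a / e) /\<^sub>R (1/e)) ((d - - a / e) /\<^sub>R (1/e)))" by simp
  have q1: "(c - - a / e) /\<^sub>R (1/e) = e * c + a" "(d - - a / e) /\<^sub>R (1/e) = e * d + a"
    "integral {c..d} H /\<^sub>R (1/e) ^ DIM(real) = e * integral {c..d} H"
    using e by (auto simp: field_simps)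
  have "((\<lambda>x. H ((1/e) * x + - a / e)) has_integral (e * integral {c..d} H)) {e * c + a .. e * d + a}"
    using h unfolding q1 by simp
  moreover have "(\<lambda>x. H ((1/e) * x + - a / e)) = (\<lambda>x. H ((x - a) / e))"
    using e by (simp add: field_simps)
  ultimately have i: "((\<lambda>x. H ((x - a) / e)) has_integral (e * integral {c..d} H)) {e * c + a .. e * d + a}"
    by simp
  show ?thesis
  proof (rule has_integral_on_superset[OF i])
    fix x assume "x \<notin> {e * c + a .. e * d + a}"
    then have "(x - a) / e \<notin> {c..d}" using e by (auto simp: field_simps)
    then show "H ((x - a) / e) = 0" using s by (simp add: csupp_def)
  qed simp
qed

section \<open>Finite differences\<close>

definition Tsum :: "nat \<Rightarrow> nat \<Rightarrow> real \<Rightarrow> real" where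
  "Tsum n q a = (\<Sum>i\<le>n. (-1) ^ i * real (n choose i) * (a + real i) ^ q)"

lemma absorb:
  "(\<Sum>i\<le>Suc m. (-1) ^ i * real (Suc m choose i) * real i * f i) =
   - real (Suc m) * (\<Sum>i\<le>m. (-1) ^ i * real (m choose i) * f (Suc i))"
proof -
  have "(\<Sum>i\<le>Suc m. (-1) ^ i * real (Suc m choose i) * real i * f i) =
        (\<Sum>i\<le>m. (-1) ^ Suc i * real (Suc m choose Suc i) * real (Suc i) * f (Suc i))"
    by (simp only: sum.atMost_Suc_shift)
  also have "\<dots> = (\<Sum>i\<le>m. (-1) ^ Suc i * real (Suc i * (Suc m choose Suc i)) * f (Suc i))"
    by (rule sum.cong[OF refl]) (simp only: of_nat_mult mult_ac)
  also have "\<dots> = (\<Sum>i\<le>m. (-1) ^ Suc i * real (Suc m * (m choose i)) * f (Suc i))"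
    by (simp only: Suc_times_binomial)
  also have "\<dots> = - real (Suc m) * (\<Sum>i\<le>m. (-1) ^ i * real (m choose i) * f (Suc i))"
    unfolding sum_distrib_left by (rule sum.cong[OF refl]) (simp add: algebra_simps)
  finally show ?thesis .
qed

lemma Tsum_zero: "q < n \<Longrightarrow> Tsum n q a = 0"
proof (induction q arbitrary: n a)
  case 0
  then show ?case unfolding Tsum_def using choose_alternating_sum[of n] by (simp add: mult_ac)
next
  case (Suc q)
  then obtain m where m: "n = Suc m" "q < m" by (cases n) auto
  have "Tsum n (Suc q) a = (\<Sum>i\<le>n. (-1) ^ i * real (n choose i) * (a * (a + real i) ^ q)) +
          (\<Sum>i\<le>n. (-1) ^ i * real (n choose i) * real i * (a + real i) ^ q)"
    unfolding Tsum_def by (simp add: sum.distrib[symmetric] algebra_simps)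
  also have "(\<Sum>i\<le>n. (-1) ^ i * real (n choose i) * (a * (a + real i) ^ q)) = a * Tsum n q a"
    unfolding Tsum_def by (simp add: sum_distrib_left mult_ac)
  also have "Tsum n q a = 0" using Suc.IH[of n a] Suc.prems by simp
  also have "(\<Sum>i\<le>n. (-1) ^ i * real (n choose i) * real i * (a + real i) ^ q) =
       - real (Suc m) * (\<Sum>i\<le>m. (-1) ^ i * real (m choose i) * (a + real (Suc i)) ^ q)"
    unfolding m(1) by (rule absorb)
  also have "(\<Sum>i\<le>m. (-1) ^ i * real (m choose i) * (a + real (Suc i)) ^ q) = Tsum m q (a + 1)"
    unfolding Tsum_def by (simp add: algebra_simps)
  also have "Tsum m q (a + 1) = 0" using Suc.IH m by simp
  finally show ?case by simp
qed

definition cc :: "nat \<Rightarrow> nat \<Rightarrow> real" where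
  "cc n i = - ((-1) ^ i * real (n choose i))"

lemma cc_moments:
  assumes "q < n"
  shows "(\<Sum>i\<in>{1..n}. cc n i * real i ^ q) = (if q = 0 then 1 else 0)"
proof -
  have "Tsum n q 0 = 0" using Tsum_zero[OF assms] .
  moreover have "{..n} = insert 0 {1..n}" by auto
  ultimately have "0 ^ q + (\<Sum>i\<in>{1..n}. (-1) ^ i * real (n choose i) * real i ^ q) = (0::real)"
    unfolding Tsum_def by simp
  then have "(\<Sum>i\<in>{1..n}. (-1) ^ i * real (n choose i) * real i ^ q) = - (0 ^ q)" by linarith
  then have "(\<Sum>i\<in>{1..n}. cc n i * real i ^ q) = 0 ^ q"
    unfolding cc_def by (simp add: sum_negf)
  then show ?thesis by simp
qed

definition I0 :: real where "I0 = integral {0..1} bump0"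

lemma bump0_cont: "continuous_on S bump0"
  by (rule cinf_cont[OF cinf_bump0])

lemma I0_pos: "I0 > 0"
proof -
  have hi: "(bump0 has_integral I0) (cbox 0 1)"
    unfolding I0_def using integrable_continuous_interval[OF bump0_cont] by (simp add: integrable_integral)
  have "I0 \<ge> 0" by (rule has_integral_nonneg[OF hi]) (simp add: bump0_nonneg)
  moreover have "I0 \<noteq> 0"
  proof
    assume "I0 = 0"
    then have "bump0 (1/2) = 0"
      using has_integral_0_cbox_imp_0[of 0 1 bump0 "1/2"] hi bump0_cont bump0_nonneg by simp
    then show False using bump0_pos by simp
  qed
  ultimately show ?thesis by simp
qed

definition beta :: "real \<Rightarrow> real" where "beta y = bump0 y / I0"

lemma cinf_beta: "cinf beta"
proof -
  have "cinf (\<lambda>y. (1 / I0) * bump0 y + 0 * bump0 y)" by (intro cinf_lin cinf_bump0)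
  then show ?thesis unfolding beta_def[abs_def] by simp
qed

lemma beta_cont: "continuous_on S beta"
  by (rule cinf_cont[OF cinf_beta])

lemma csupp_beta: "csupp beta 0 1"
  unfolding csupp_def beta_def using bump0_supp by simp

lemma beta_int: "integral {0..1} beta = 1"
  unfolding beta_def[abs_def] using I0_pos by (simp add: I0_def)

definition phi :: "nat \<Rightarrow> real \<Rightarrow> real \<Rightarrow> real" where
  "phi n h y = (\<Sum>i\<in>{1..n}. cc n i * beta (y - real i * h))"

lemma cinf_phi: "cinf (phi n h)"
  unfolding phi_def[abs_def]
proof (rule cinf_sum)
  fix i
  have "cinf (\<lambda>y. cc n i * beta (y - real i * h) + 0 * beta y)"
    by (intro cinf_lin cinf_shift cinf_beta)
  then show "cinf (\<lambda>y. cc n i * beta (y - real i * h))" by simp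
qed simp

lemma phi_cont: "continuous_on S (phi n h)"
  by (rule cinf_cont[OF cinf_phi])

lemma csupp_phi:
  assumes "h > 0"
  shows "csupp (phi n h) h (real n * h + 1)"
  unfolding phi_def[abs_def]
proof (rule csupp_sum)
  fix i assume i: "i \<in> {1..n}"
  show "csupp (\<lambda>y. cc n i * beta (y - real i * h)) h (real n * h + 1)"
    unfolding csupp_def
  proof (intro allI impI)
    fix y assume y: "y \<notin> {h..real n * h + 1}"
    have "real i * h \<ge> h" using i assms by (simp add: mult_le_cancel_right1)
    moreover have "real i * h \<le> real n * h" using i assms by (simp add: mult_right_mono)
    ultimately have "y - real i * h \<notin> {0..1}" using y by auto
    then show "cc n i * beta (y - real i * h) = 0" using csupp_beta by (simp add: csupp_def)
  qed
qed

lemma cc_sum: "n \<ge> 1 \<Longrightarrow> (\<Sum>i\<in>{1..n}. cc n i) = 1"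
  using cc_moments[of 0 n] by simp

lemma shift_beta_int:
  "((\<lambda>y. beta (y - s) * f y) has_integral integral {0..1} (\<lambda>z. beta z * f (z + s))) UNIV"
  if "continuous_on UNIV f" for f :: "real \<Rightarrow> real"
proof -
  have "((\<lambda>x. (\<lambda>z. beta z * f (z + s)) ((x - s) / 1)) has_integral (1 * integral {0..1} (\<lambda>z. beta z * f (z + s)))) UNIV"
  proof (rule aff_int)
    show "continuous_on UNIV (\<lambda>z. beta z * f (z + s))"
      by (intro continuous_intros beta_cont continuous_on_compose2[OF that]) auto
    show "csupp (\<lambda>z. beta z * f (z + s)) 0 1" using csupp_beta by (simp add: csupp_def)
  qed simp
  then show ?thesis by simp
qed

lemma phi_moment:
  assumes "j < n"
  shows "((\<lambda>y. phi n h y * y ^ j) has_integral integral {0..1} (\<lambda>z. beta z * z ^ j)) UNIV"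
proof -
  define m where "m r = integral {0..1} (\<lambda>z. beta z * z ^ r)" for r
  have bi: "((\<lambda>y. beta (y - s) * y ^ j) has_integral (\<Sum>r\<le>j. real (j choose r) * s ^ (j - r) * m r)) UNIV" for s
  proof -
    have "((\<lambda>y. beta (y - s) * y ^ j) has_integral integral {0..1} (\<lambda>z. beta z * (z + s) ^ j)) UNIV"
      by (rule shift_beta_int) (intro continuous_intros)
    moreover have "integral {0..1} (\<lambda>z. beta z * (z + s) ^ j) = integral {0..1} (\<lambda>z. \<Sum>r\<le>j. (real (j choose r) * s ^ (j - r)) * (beta z * z ^ r))"
      by (rule integral_cong) (simp add: binomial_ring sum_distrib_left mult_ac)
    moreover have "\<dots> = (\<Sum>r\<le>j. integral {0..1} (\<lambda>z. (real (j choose r) * s ^ (j - r)) * (beta z * z ^ r)))"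
      by (rule integral_sum) (auto intro!: integrable_continuous_interval continuous_intros beta_cont)
    moreover have "\<dots> = (\<Sum>r\<le>j. real (j choose r) * s ^ (j - r) * m r)"
      by (simp only: integral_mult_right m_def)
    ultimately show ?thesis by simp
  qed
  have "((\<lambda>y. \<Sum>i\<in>{1..n}. cc n i * (beta (y - real i * h) * y ^ j)) has_integral
         (\<Sum>i\<in>{1..n}. cc n i * (\<Sum>r\<le>j. real (j choose r) * (real i * h) ^ (j - r) * m r))) UNIV"
    by (intro has_integral_sum has_integral_mult_right bi) auto
  moreover have "(\<lambda>y. \<Sum>i\<in>{1..n}. cc n i * (beta (y - real i * h) * y ^ j)) = (\<lambda>y. phi n h y * y ^ j)"
    by (rule ext) (simp add: phi_def sum_distrib_left mult_ac)
  moreover have "(\<Sum>i\<in>{1..n}. cc n i * (\<Sum>r\<le>j. real (j choose r) * (real i * h) ^ (j - r) * m r)) = m j"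
  proof -
    have "(\<Sum>i\<in>{1..n}. cc n i * (\<Sum>r\<le>j. real (j choose r) * (real i * h) ^ (j - r) * m r)) =
          (\<Sum>r\<le>j. real (j choose r) * h ^ (j - r) * m r * (\<Sum>i\<in>{1..n}. cc n i * real i ^ (j - r)))"
      by (simp add: sum_distrib_left sum_distrib_right power_mult_distrib mult_ac, rule sum.swap)
    also have "\<dots> = (\<Sum>r\<le>j. (if r = j then m j else 0))"
    proof (rule sum.cong[OF refl])
      fix r assume r: "r \<in> {..j}"
      then have "j - r < n" using assms by auto
      then show "real (j choose r) * h ^ (j - r) * m r * (\<Sum>i\<in>{1..n}. cc n i * real i ^ (j - r)) = (if r = j then m j else 0)"
      proof -
        have cm: "(\<Sum>i\<in>{1..n}. cc n i * real i ^ (j - r)) = (if j - r = 0 then 1 else 0)"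
          by (rule cc_moments) fact
        show ?thesis
        proof (cases "r = j")
          case True then show ?thesis using cm by simp
        next
          case False then have "j - r \<noteq> 0" using r by auto
          then show ?thesis using cm False by simp
        qed
      qed
    qed
    also have "\<dots> = m j" by simp
    finally show ?thesis .
  qed
  ultimately show ?thesis unfolding m_def by simp
qed

lemma phi_int:
  assumes "n \<ge> 1"
  shows "(phi n h has_integral 1) UNIV"
  using phi_moment[of 0 n h] assms beta_int by simp

lemma phi_zero_below: "(h::real) > 0 \<Longrightarrow> (y::real) < h \<Longrightarrow> phi n h y = 0"
  using csupp_phi[of h n] by (simp add: csupp_def)

lemma prim_phi_low: "(h::real) > 0 \<Longrightarrow> (y::real) \<le> h \<Longrightarrow> prim (phi n h) y = 0"
  by (rule prim_zero[OF phi_cont, of h]) (auto simp: phi_zero_below)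

lemma prim_phi_high: "(h::real) > 0 \<Longrightarrow> (n::nat) \<ge> 1 \<Longrightarrow> (y::real) \<ge> real n * h + 1 \<Longrightarrow> prim (phi n h) y = 1"
proof -
  assume h: "h > 0" and n: "n \<ge> 1" and y: "y \<ge> real n * h + 1"
  have "prim (phi n h) y = integral UNIV (phi n h)"
    by (rule prim_top[OF phi_cont csupp_phi[OF h]]) (use y in simp)
  also have "\<dots> = 1" by (rule integral_unique[OF phi_int[OF n]])
  finally show ?thesis .
qed

lemma pd_lemma:
  assumes F: "\<And>y. (F has_real_derivative F' y) (at y)" and e: "e \<noteq> 0"
  shows "pdt (\<lambda>t x. c + m * F ((x - v * t) / e)) t x = m * F' ((x - v * t) / e) * (- v / e)"
    and "pdx (\<lambda>t x. c + m * F ((x - v * t) / e)) t x = m * F' ((x - v * t) / e) / e"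
proof -
  have "((\<lambda>s. F ((x - v * s) / e)) has_real_derivative F' ((x - v * t) / e) * (- v / e)) (at t)"
    by (rule DERIV_chain2[where g="\<lambda>s. (x - v * s) / e", OF F]) (use e in \<open>auto intro!: derivative_eq_intros simp: field_simps\<close>)
  from DERIV_add[OF DERIV_const[of c] DERIV_cmult[OF this, of m]]
  have "((\<lambda>s. c + m * F ((x - v * s) / e)) has_real_derivative m * (F' ((x - v * t) / e) * (- v / e))) (at t)"
    by simp
  then show "pdt (\<lambda>t x. c + m * F ((x - v * t) / e)) t x = m * F' ((x - v * t) / e) * (- v / e)"
    unfolding pdt_def by (simp add: DERIV_imp_deriv)
  have "((\<lambda>y. F ((y - v * t) / e)) has_real_derivative F' ((x - v * t) / e) * (1 / e)) (at x)"
    by (rule DERIV_chain2[where g="\<lambda>y. (y - v * t) / e", OF F]) (use e in \<open>auto intro!: derivative_eq_intros simp: field_simps\<close>)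
  from DERIV_add[OF DERIV_const[of c] DERIV_cmult[OF this, of m]]
  have "((\<lambda>y. c + m * F ((y - v * t) / e)) has_real_derivative m * (F' ((x - v * t) / e) * (1 / e))) (at x)"
    by simp
  then show "pdx (\<lambda>t x. c + m * F ((x - v * t) / e)) t x = m * F' ((x - v * t) / e) / e"
    unfolding pdx_def by (simp add: DERIV_imp_deriv)
qed

lemma Egood:
  fixes G \<psi> :: "real \<Rightarrow> real" and E :: "real \<Rightarrow> real \<Rightarrow> real"
  assumes G: "continuous_on UNIV G" and sG: "csupp G c d"
    and mom: "\<forall>j<n. integral {c..d} (\<lambda>y. G y * y ^ j) = 0" and pn: "p \<le> int n"
    and psi: "schwartz \<psi>"
    and E: "\<And>e x. e > 0 \<Longrightarrow> E e x = G ((x - v * t) / e) / e"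
  shows "(\<forall>e\<in>{0<..1}. (\<lambda>x. E e x * \<psi> x) integrable_on UNIV) \<and>
         eps_expansion_from p (\<lambda>e. integral UNIV (\<lambda>x. E e x * \<psi> x))"
proof -
  have psic: "continuous_on S \<psi>" for S using schwartz_cont[OF psi] .
  have hi: "((\<lambda>x. E e x * \<psi> x) has_integral integral {c..d} (\<lambda>y. G y * \<psi> (v * t + e * y))) UNIV"
    if e: "e > 0" for e
  proof -
    let ?H = "\<lambda>y. G y * \<psi> (v * t + e * y)"
    have "((\<lambda>x. ?H ((x - v * t) / e)) has_integral (e * integral {c..d} ?H)) UNIV"
    proof (rule aff_int[OF _ _ e])
      show "continuous_on UNIV ?H"
        by (intro continuous_intros G continuous_on_compose2[OF psic]) auto
      show "csupp ?H c d" using sG by (simp add: csupp_def)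
    qed
    then have "((\<lambda>x. (1 / e) * ?H ((x - v * t) / e)) has_integral (1 / e) * (e * integral {c..d} ?H)) UNIV"
      by (rule has_integral_mult_right)
    moreover have "(\<lambda>x. (1 / e) * ?H ((x - v * t) / e)) = (\<lambda>x. E e x * \<psi> x)"
      using e by (auto simp: E field_simps)
    ultimately show ?thesis using e by simp
  qed
  have "eps_expansion_from p (\<lambda>e. integral {c..d} (\<lambda>y. G y * \<psi> (v * t + e * y)))"
    by (rule expansion[OF G mom pn psi])
  moreover have "eventually (\<lambda>e. integral {c..d} (\<lambda>y. G y * \<psi> (v * t + e * y)) = integral UNIV (\<lambda>x. E e x * \<psi> x)) (at_right 0)"
    by (rule eventually_at_rightI[where b=1]) (auto intro!: integral_unique[symmetric] hi)
  ultimately have "eps_expansion_from p (\<lambda>e. integral UNIV (\<lambda>x. E e x * \<psi> x))"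
    by (rule eps_cong[rotated])
  moreover have "\<forall>e\<in>{0<..1}. (\<lambda>x. E e x * \<psi> x) integrable_on UNIV"
  proof
    fix e :: real assume "e \<in> {0<..1}"
    then have "e > 0" by simp
    from hi[OF this] show "(\<lambda>x. E e x * \<psi> x) integrable_on UNIV" by (rule has_integral_integrable)
  qed
  ultimately show ?thesis by simp
qed

lemma prim_lin:
  fixes f g :: "real \<Rightarrow> real"
  assumes fc: "continuous_on UNIV f" and gc: "continuous_on UNIV g"
    and f0: "\<And>y. y < a \<Longrightarrow> f y = 0" and g0: "\<And>y. y < a \<Longrightarrow> g y = 0"
  shows "prim (\<lambda>y. \<alpha> * f y + \<beta> * g y) x = \<alpha> * prim f x + \<beta> * prim g x"
proof -
  define a0 where "a0 = min a x"
  have le: "a0 \<le> x" "a0 \<le> a" by (simp_all add: a0_def)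
  have zf: "f y = 0" if "y < a0" for y using f0[of y] that le(2) by linarith
  have zg: "g y = 0" if "y < a0" for y using g0[of y] that le(2) by linarith
  have zh: "\<alpha> * f y + \<beta> * g y = 0" if "y < a0" for y using zf[OF that] zg[OF that] by simp
  have c: "continuous_on UNIV (\<lambda>y. \<alpha> * f y + \<beta> * g y)" by (intro continuous_intros fc gc)
  have fi: "f integrable_on {a0..x}" by (rule integrable_continuous_interval, rule continuous_on_subset[OF fc]) simp
  have gi: "g integrable_on {a0..x}" by (rule integrable_continuous_interval, rule continuous_on_subset[OF gc]) simp
  have "prim (\<lambda>y. \<alpha> * f y + \<beta> * g y) x = integral {a0..x} (\<lambda>y. \<alpha> * f y + \<beta> * g y)"
    by (rule prim_int[OF c zh le(1)])
  also have "\<dots> = integral {a0..x} (\<lambda>y. \<alpha> * f y) + integral {a0..x} (\<lambda>y. \<beta> * g y)"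
    by (rule integral_add; rule integrable_continuous_interval; intro continuous_intros continuous_on_subset[OF fc] continuous_on_subset[OF gc]; simp)
  also have "\<dots> = \<alpha> * integral {a0..x} f + \<beta> * integral {a0..x} g"
    by (simp only: integral_mult_right)
  also have "\<dots> = \<alpha> * prim f x + \<beta> * prim g x"
    using prim_int[OF fc zf le(1)] prim_int[OF gc zg le(1)] by simp
  finally show ?thesis .
qed

lemma combo_props:
  fixes a :: "nat \<Rightarrow> real" and H :: "nat \<Rightarrow> real" and n :: nat
  assumes n: "n \<ge> 1" and sa: "(\<Sum>i<5. a i) = 0" and H1: "\<And>i::nat. 1 \<le> H i" and H4: "\<forall>i::nat<5. H i \<le> H 4"
    and Gdef: "\<forall>y. G y = (\<Sum>i::nat<5. a i * phi n (H i) y)"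
  shows "continuous_on UNIV G" "csupp G 1 (real n * H 4 + 1)"
    "\<forall>j<n. integral {1..real n * H 4 + 1} (\<lambda>y. G y * y ^ j) = 0"
proof -
  have Geq: "G = (\<lambda>y. \<Sum>i::nat<5. a i * phi n (H i) y)" using Gdef by auto
  show c: "continuous_on UNIV G" unfolding Geq by (intro continuous_intros phi_cont)
  show s: "csupp G 1 (real n * H 4 + 1)"
    unfolding Geq
  proof (rule csupp_sum)
    fix i :: nat assume i: "i \<in> {..<5}"
    have hp: "H i > 0" using H1[of i] by simp
    have "csupp (phi n (H i)) 1 (real n * H 4 + 1)"
    proof (rule csupp_mono[OF csupp_phi[OF hp]])
      show "1 \<le> H i" by (rule H1)
      show "real n * H i + 1 \<le> real n * H 4 + 1" using H4 i by (simp add: mult_left_mono)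
    qed
    then show "csupp (\<lambda>y. a i * phi n (H i) y) 1 (real n * H 4 + 1)" by (simp add: csupp_def)
  qed
  show "\<forall>j<n. integral {1..real n * H 4 + 1} (\<lambda>y. G y * y ^ j) = 0"
  proof (intro allI impI)
    fix j assume j: "j < n"
    have "((\<lambda>y. \<Sum>i<5. a i * (phi n (H i) y * y ^ j)) has_integral (\<Sum>i<5. a i * integral {0..1} (\<lambda>z. beta z * z ^ j))) UNIV"
      by (intro has_integral_sum has_integral_mult_right phi_moment j) auto
    moreover have "(\<lambda>y. \<Sum>i<5. a i * (phi n (H i) y * y ^ j)) = (\<lambda>y. G y * y ^ j)"
      by (rule ext) (simp add: Geq sum_distrib_left mult_ac)
    moreover have "(\<Sum>i<5. a i * integral {0..1} (\<lambda>z. beta z * z ^ j)) = 0"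
      using sa by (simp add: sum_distrib_right[symmetric])
    ultimately have "((\<lambda>y. G y * y ^ j) has_integral 0) UNIV" by simp
    moreover have "integral UNIV (\<lambda>y. G y * y ^ j) = integral {1..real n * H 4 + 1} (\<lambda>y. G y * y ^ j)"
      by (rule csupp_int_univ(2)) (use c s in \<open>auto intro!: continuous_intros simp: csupp_def\<close>)
    ultimately show "integral {1..real n * H 4 + 1} (\<lambda>y. G y * y ^ j) = 0"
      using integral_unique by metis
  qed
qed

lemma construction:
  fixes u0 du rho0 drho sigma0 dsigma v k T :: real and p :: int
  assumes du: "du \<noteq> 0" and dr: "drho \<noteq> 0" and ds: "dsigma \<noteq> 0"
    and c1: "rho0 * du\<^sup>2 * (rho0 + drho) + dsigma * drho = 0"
    and vdef: "v = u0 + du + rho0 * du / drho"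
    and c2: "dsigma * (rho0 + drho / 2) + k\<^sup>2 * drho = 0"
  shows "\<exists>Ut Rt St :: real \<Rightarrow> real.
    du \<noteq> 0 \<and> drho \<noteq> 0 \<and> dsigma \<noteq> 0 \<and>
    schwartz Ut \<and> schwartz Rt \<and> schwartz St \<and>
    integral UNIV Ut = 1 \<and> integral UNIV Rt = 1 \<and> integral UNIV St = 1 \<and>
    (let u = (\<lambda>\<epsilon> t x. u0 + du * prim Ut ((x - v * t) / \<epsilon>));
         \<rho> = (\<lambda>\<epsilon> t x. rho0 + drho * prim Rt ((x - v * t) / \<epsilon>));
         \<sigma> = (\<lambda>\<epsilon> t x. sigma0 + dsigma * prim St ((x - v * t) / \<epsilon>));
         E1 = (\<lambda>\<epsilon> t x. pdt (\<rho> \<epsilon>) t x + pdx (\<rho> \<epsilon>) t x * u \<epsilon> t x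
                        + \<rho> \<epsilon> t x * pdx (u \<epsilon>) t x);
         E2 = (\<lambda>\<epsilon> t x. pdt (\<rho> \<epsilon>) t x * u \<epsilon> t x + \<rho> \<epsilon> t x * pdt (u \<epsilon>) t x
                        + pdx (\<rho> \<epsilon>) t x * (u \<epsilon> t x)\<^sup>2
                        + 2 * \<rho> \<epsilon> t x * u \<epsilon> t x * pdx (u \<epsilon>) t x
                        - pdx (\<sigma> \<epsilon>) t x);
         E3 = (\<lambda>\<epsilon> t x. pdt (\<sigma> \<epsilon>) t x + u \<epsilon> t x * pdx (\<sigma> \<epsilon>) t x
                        - k\<^sup>2 * pdx (u \<epsilon>) t x)
     in \<forall>t\<in>{0..T}. \<forall>\<psi>. schwartz \<psi> \<longrightarrow>
          (\<forall>E\<in>{E1, E2, E3}.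
             (\<forall>\<epsilon>\<in>{0<..1}. (\<lambda>x. E \<epsilon> t x * \<psi> x) integrable_on UNIV) \<and>
             eps_expansion_from p (\<lambda>\<epsilon>. integral UNIV (\<lambda>x. E \<epsilon> t x * \<psi> x)))) \<and>
    rho0 * du\<^sup>2 * (rho0 + drho) + dsigma * drho = 0 \<and>
    dsigma * (rho0 + drho / 2) + k\<^sup>2 * drho = 0 \<and>
    v = u0 + du + rho0 * du / drho"
proof -
  define n where "n = nat p + 1"
  have n1: "n \<ge> 1" and pn: "p \<le> int n" by (auto simp: n_def)
  define H where "H i = (real n + 2) ^ i" for i :: nat
  have H1: "1 \<le> H i" for i unfolding H_def by (rule one_le_power) simp
  have Hpos: "0 < H i" for i using H1[of i] by simp
  have Hmono: "i \<le> j \<Longrightarrow> H i \<le> H j" for i j unfolding H_def by (rule power_increasing) auto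
  have Hsep: "real n * H i + 1 < H j" if "i < j" for i j
  proof -
    have "H (Suc i) \<le> H j" using that Hmono by simp
    moreover have "H (Suc i) = real n * H i + 2 * H i" unfolding H_def by (simp add: algebra_simps)
    ultimately show ?thesis using H1[of i] by simp
  qed
  define P where "P i = phi n (H i)" for i
  define Q where "Q i = prim (P i)" for i
  have Pc: "continuous_on S (P i)" for S i unfolding P_def by (rule phi_cont)
  have Psupp: "H i \<le> y \<and> y \<le> real n * H i + 1" if "P i y \<noteq> 0" for i y
    using csupp_phi[OF Hpos[of i], of n] that unfolding P_def csupp_def by auto
  have Pdisj: "P j y = 0" if "P i y \<noteq> 0" "i \<noteq> j" for i j y
  proof (rule ccontr)
    assume "P j y \<noteq> 0"
    then have "H j \<le> y \<and> y \<le> real n * H j + 1" by (rule Psupp)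
    moreover have "H i \<le> y \<and> y \<le> real n * H i + 1" using that(1) by (rule Psupp)
    ultimately show False using Hsep[of i j] Hsep[of j i] that(2) by (cases "i < j") auto
  qed
  have Qlow: "Q j y = 0" if "P i y \<noteq> 0" "i < j" for i j y
    unfolding Q_def P_def
    by (rule prim_phi_low[OF Hpos]) (use Psupp[OF that(1)] Hsep[OF that(2)] in auto)
  have Qhigh: "Q j y = 1" if "P i y \<noteq> 0" "j < i" for i j y
    unfolding Q_def P_def
    by (rule prim_phi_high[OF Hpos n1]) (use Psupp[OF that(1)] Hsep[OF that(2)] in auto)
  have Pzero: "P i y = 0" if "y < 1" for i y
    unfolding P_def by (rule phi_zero_below[OF Hpos]) (use that H1[of i] in auto)
  have Pint: "(P i has_integral 1) UNIV" for i unfolding P_def by (rule phi_int[OF n1])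
  have Pcinf: "cinf (P i)" for i unfolding P_def by (rule cinf_phi)
  have Pcs: "csupp (P i) (H i) (real n * H i + 1)" for i unfolding P_def by (rule csupp_phi[OF Hpos])
  define w0 where "w0 = u0 - v"
  define w1 where "w1 = u0 + du - v"
  define C1 where "C1 = (w1 * dsigma - k\<^sup>2 * du) / du"
  define C3 where "C3 = dsigma - C1"
  define Ut where "Ut = P 2"
  define Rt where "Rt y = (- rho0 / drho) * P 0 y + ((rho0 + drho) / drho) * P 3 y" for y
  define St where "St y = (C1 / dsigma) * P 1 y + (C3 / dsigma) * P 4 y" for y
  have sUt: "schwartz Ut" unfolding Ut_def by (rule good_schwartz[OF Pcinf Pcs])
  have sRt: "schwartz Rt" unfolding Rt_def[abs_def]
    by (rule good_schwartz[OF cinf_lin[OF Pcinf Pcinf] csupp_lin[OF Pcs Pcs]])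
  have sSt: "schwartz St" unfolding St_def[abs_def]
    by (rule good_schwartz[OF cinf_lin[OF Pcinf Pcinf] csupp_lin[OF Pcs Pcs]])
  have iUt: "integral UNIV Ut = 1" unfolding Ut_def using Pint by (simp add: integral_unique)
  have iRt: "integral UNIV Rt = 1"
  proof -
    have "(Rt has_integral (- rho0 / drho) * 1 + ((rho0 + drho) / drho) * 1) UNIV"
      unfolding Rt_def[abs_def] by (intro has_integral_add has_integral_mult_right Pint)
    then show ?thesis using dr by (simp add: integral_unique field_simps)
  qed
  have iSt: "integral UNIV St = 1"
  proof -
    have "(St has_integral (C1 / dsigma) * 1 + (C3 / dsigma) * 1) UNIV"
      unfolding St_def[abs_def] by (intro has_integral_add has_integral_mult_right Pint)
    then show ?thesis using ds by (simp add: integral_unique field_simps C3_def)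
  qed
  have primU: "prim Ut y = Q 2 y" for y unfolding Ut_def Q_def by simp
  have primR: "prim Rt y = (- rho0 / drho) * Q 0 y + ((rho0 + drho) / drho) * Q 3 y" for y
    unfolding Rt_def[abs_def] Q_def by (rule prim_lin[OF Pc Pc Pzero Pzero])
  have primS: "prim St y = (C1 / dsigma) * Q 1 y + (C3 / dsigma) * Q 4 y" for y
    unfolding St_def[abs_def] Q_def by (rule prim_lin[OF Pc Pc Pzero Pzero])
  have cU: "continuous_on UNIV Ut" unfolding Ut_def by (rule Pc)
  have cR: "continuous_on UNIV Rt" unfolding Rt_def[abs_def] by (intro continuous_intros Pc)
  have cS: "continuous_on UNIV St" unfolding St_def[abs_def] by (intro continuous_intros Pc)
  have dU: "(prim Ut has_real_derivative Ut y) (at y)" for y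
    by (rule prim_deriv[OF cU, of 1]) (simp add: Ut_def Pzero)
  have dR: "(prim Rt has_real_derivative Rt y) (at y)" for y
    by (rule prim_deriv[OF cR, of 1]) (simp add: Rt_def Pzero)
  have dS: "(prim St has_real_derivative St y) (at y)" for y
    by (rule prim_deriv[OF cS, of 1]) (simp add: St_def Pzero)
  have pdU1: "pdt (\<lambda>t x. u0 + du * prim Ut ((x - v * t) / e)) t x = du * Ut ((x - v * t) / e) * (- v / e)"
    and pdU2: "pdx (\<lambda>t x. u0 + du * prim Ut ((x - v * t) / e)) t x = du * Ut ((x - v * t) / e) / e"
    if "0 < e" for e t x using pd_lemma[OF dU, of e] that by auto
  have pdR1: "pdt (\<lambda>t x. rho0 + drho * prim Rt ((x - v * t) / e)) t x = drho * Rt ((x - v * t) / e) * (- v / e)"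
    and pdR2: "pdx (\<lambda>t x. rho0 + drho * prim Rt ((x - v * t) / e)) t x = drho * Rt ((x - v * t) / e) / e"
    if "0 < e" for e t x using pd_lemma[OF dR, of e] that by auto
  have pdS1: "pdt (\<lambda>t x. sigma0 + dsigma * prim St ((x - v * t) / e)) t x = dsigma * St ((x - v * t) / e) * (- v / e)"
    and pdS2: "pdx (\<lambda>t x. sigma0 + dsigma * prim St ((x - v * t) / e)) t x = dsigma * St ((x - v * t) / e) / e"
    if "0 < e" for e t x using pd_lemma[OF dS, of e] that by auto
  define Uf where "Uf y = u0 + du * prim Ut y" for y
  define Rf where "Rf y = rho0 + drho * prim Rt y" for y
  define G1 where "G1 y = (Uf y - v) * (drho * Rt y) + Rf y * (du * Ut y)" for y
  define G2 where "G2 y = - v * (drho * Rt y) * Uf y + Rf y * (- v * (du * Ut y)) + drho * Rt y * (Uf y)\<^sup>2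
     + 2 * Rf y * Uf y * (du * Ut y) - dsigma * St y" for y
  define G3 where "G3 y = - v * (dsigma * St y) + Uf y * (dsigma * St y) - k\<^sup>2 * (du * Ut y)" for y
  define a1 where "a1 = (\<lambda>i. [- rho0 * w0, 0, 0, (rho0 + drho) * w1, 0] ! i)"
  define a2 where "a2 = (\<lambda>i. [- rho0 * u0 * w0, - C1, 0, (rho0 + drho) * (u0 + du) * w1, - C3] ! i)"
  define a3 where "a3 = (\<lambda>i. [0, w0 * C1, - k\<^sup>2 * du, 0, w1 * C3] ! i)"
  have sum5: "(\<Sum>i<5. f i) = f 0 + f 1 + f 2 + f 3 + f (4::nat)" for f :: "nat \<Rightarrow> real"
    by (simp add: eval_nat_numeral)
  have phiP: "phi n (H i) = P i" for i by (simp add: P_def)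
  have ds_eq: "dsigma = - rho0 * du\<^sup>2 * (rho0 + drho) / drho"
    using c1 dr by (simp add: field_simps)
  have Gall: "G1 y = (\<Sum>i<5. a1 i * phi n (H i) y) \<and> G2 y = (\<Sum>i<5. a2 i * phi n (H i) y)
      \<and> G3 y = (\<Sum>i<5. a3 i * phi n (H i) y)" for y
  proof -
    have Uf: "Uf y = u0 + du * Q 2 y" by (simp add: Uf_def primU)
    have Rf: "Rf y = rho0 + drho * ((- rho0 / drho) * Q 0 y + ((rho0 + drho) / drho) * Q 3 y)"
      by (simp add: Rf_def primR)
    note defs = G1_def G2_def G3_def Uf Rf Rt_def St_def Ut_def a1_def a2_def a3_def sum5 phiP
    consider (c0) "P 0 y \<noteq> 0" | (c1) "P 1 y \<noteq> 0" | (c2) "P 2 y \<noteq> 0" | (c3) "P 3 y \<noteq> 0"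
      | (c4) "P 4 y \<noteq> 0" | (cn) "P 0 y = 0" "P 1 y = 0" "P 2 y = 0" "P 3 y = 0" "P 4 y = 0" by blast
    then show ?thesis
    proof cases
      case c0
      have z: "P 1 y = 0" "P 2 y = 0" "P 3 y = 0" "P 4 y = 0" using Pdisj[OF c0] by auto
      have q: "Q 2 y = 0" using Qlow[OF c0] by simp
      show ?thesis unfolding defs using z q dr ds by (simp add: w0_def field_simps power2_eq_square)
    next
      case c1
      have z: "P 0 y = 0" "P 2 y = 0" "P 3 y = 0" "P 4 y = 0" using Pdisj[OF c1] by auto
      have q: "Q 2 y = 0" using Qlow[OF c1] by simp
      show ?thesis unfolding defs using z q dr ds by (simp add: w0_def field_simps power2_eq_square)
    next
      case c2
      have z: "P 0 y = 0" "P 1 y = 0" "P 3 y = 0" "P 4 y = 0" using Pdisj[OF c2] by auto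
      have q: "Q 0 y = 1" "Q 3 y = 0" using Qlow[OF c2] Qhigh[OF c2] by simp_all
      show ?thesis unfolding defs using z q dr ds by (simp add: field_simps power2_eq_square)
    next
      case c3
      have z: "P 0 y = 0" "P 1 y = 0" "P 2 y = 0" "P 4 y = 0" using Pdisj[OF c3] by auto
      have q: "Q 2 y = 1" using Qhigh[OF c3] by simp
      show ?thesis unfolding defs using z q dr ds by (simp add: w1_def field_simps power2_eq_square)
    next
      case c4
      have z: "P 0 y = 0" "P 1 y = 0" "P 2 y = 0" "P 3 y = 0" using Pdisj[OF c4] by auto
      have q: "Q 2 y = 1" using Qhigh[OF c4] by simp
      show ?thesis unfolding defs using z q dr ds by (simp add: w1_def field_simps power2_eq_square)
    next
      case cn
      show ?thesis unfolding defs using cn by simp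
    qed
  qed
  have G1c: "G1 = (\<lambda>y. \<Sum>i<5. a1 i * phi n (H i) y)" using Gall by auto
  have G2c: "G2 = (\<lambda>y. \<Sum>i<5. a2 i * phi n (H i) y)" using Gall by auto
  have G3c: "G3 = (\<lambda>y. \<Sum>i<5. a3 i * phi n (H i) y)" using Gall by auto
  have sa1: "(\<Sum>i<5. a1 i) = 0"
    unfolding sum5 a1_def using dr by (simp add: w0_def w1_def vdef field_simps)
  have sa2: "(\<Sum>i<5. a2 i) = 0"
    unfolding sum5 a2_def using dr by (simp add: w0_def w1_def vdef C3_def ds_eq field_simps power2_eq_square)
  have sa3: "(\<Sum>i<5. a3 i) = 0"
    unfolding sum5 a3_def using du by (simp add: w0_def w1_def C3_def C1_def field_simps)
  have H4: "\<forall>i::nat<5. H i \<le> H 4" using Hmono by simp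
  have G1eq: "\<forall>y. G1 y = (\<Sum>i<5. a1 i * phi n (H i) y)" using G1c by simp
  note cp1 = combo_props[OF n1 sa1 H1 H4 G1eq]
  have G2eq: "\<forall>y. G2 y = (\<Sum>i<5. a2 i * phi n (H i) y)" using G2c by simp
  note cp2 = combo_props[OF n1 sa2 H1 H4 G2eq]
  have G3eq: "\<forall>y. G3 y = (\<Sum>i<5. a3 i * phi n (H i) y)" using G3c by simp
  note cp3 = combo_props[OF n1 sa3 H1 H4 G3eq]
  show ?thesis
    unfolding Let_def
    apply (rule exI[of _ Ut], rule exI[of _ Rt], rule exI[of _ St])
    apply (intro conjI sUt sRt sSt iUt iRt iSt du dr ds c1 c2 vdef)
    apply (rule ballI, rule allI, rule impI)
    apply (simp only: ball_simps)
    apply (rule conjI)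
    subgoal for t \<psi>
      apply (rule Egood[OF cp1 pn, of \<psi> _ v t], assumption)
      apply (simp only: pdU1 pdU2 pdR1 pdR2 pdS1 pdS2)
      apply (simp add: G1_def Uf_def Rf_def field_simps)
      done
    apply (rule conjI)
    subgoal for t \<psi>
      apply (rule Egood[OF cp2 pn, of \<psi> _ v t], assumption)
      apply (simp only: pdU1 pdU2 pdR1 pdR2 pdS1 pdS2)
      apply (simp add: G2_def Uf_def Rf_def field_simps power2_eq_square)
      done
    apply (rule conjI)
    subgoal for t \<psi>
      apply (rule Egood[OF cp3 pn, of \<psi> _ v t], assumption)
      apply (simp only: pdU1 pdU2 pdR1 pdR2 pdS1 pdS2)
      apply (simp add: G3_def Uf_def Rf_def field_simps)
      done
    apply (rule TrueI)
    done
qed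

theorem theorem5:
  fixes T k :: real and p :: int
  assumes "T > 0"
  shows "\<exists>u0 du rho0 drho sigma0 dsigma v :: real. \<exists>Ut Rt St :: real \<Rightarrow> real.
    du \<noteq> 0 \<and> drho \<noteq> 0 \<and> dsigma \<noteq> 0 \<and>
    schwartz Ut \<and> schwartz Rt \<and> schwartz St \<and>
    integral UNIV Ut = 1 \<and> integral UNIV Rt = 1 \<and> integral UNIV St = 1 \<and>
    (let u = (\<lambda>\<epsilon> t x. u0 + du * prim Ut ((x - v * t) / \<epsilon>));
         \<rho> = (\<lambda>\<epsilon> t x. rho0 + drho * prim Rt ((x - v * t) / \<epsilon>));
         \<sigma> = (\<lambda>\<epsilon> t x. sigma0 + dsigma * prim St ((x - v * t) / \<epsilon>));
         E1 = (\<lambda>\<epsilon> t x. pdt (\<rho> \<epsilon>) t x + pdx (\<rho> \<epsilon>) t x * u \<epsilon> t x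
                        + \<rho> \<epsilon> t x * pdx (u \<epsilon>) t x);
         E2 = (\<lambda>\<epsilon> t x. pdt (\<rho> \<epsilon>) t x * u \<epsilon> t x + \<rho> \<epsilon> t x * pdt (u \<epsilon>) t x
                        + pdx (\<rho> \<epsilon>) t x * (u \<epsilon> t x)\<^sup>2
                        + 2 * \<rho> \<epsilon> t x * u \<epsilon> t x * pdx (u \<epsilon>) t x
                        - pdx (\<sigma> \<epsilon>) t x);
         E3 = (\<lambda>\<epsilon> t x. pdt (\<sigma> \<epsilon>) t x + u \<epsilon> t x * pdx (\<sigma> \<epsilon>) t x
                        - k\<^sup>2 * pdx (u \<epsilon>) t x)
     in \<forall>t\<in>{0..T}. \<forall>\<psi>. schwartz \<psi> \<longrightarrow>
          (\<forall>E\<in>{E1, E2, E3}.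
             (\<forall>\<epsilon>\<in>{0<..1}. (\<lambda>x. E \<epsilon> t x * \<psi> x) integrable_on UNIV) \<and>
             eps_expansion_from p (\<lambda>\<epsilon>. integral UNIV (\<lambda>x. E \<epsilon> t x * \<psi> x)))) \<and>
    rho0 * du\<^sup>2 * (rho0 + drho) + dsigma * drho = 0 \<and>
    dsigma * (rho0 + drho / 2) + k\<^sup>2 * drho = 0 \<and>
    v = u0 + du + rho0 * du / drho"
proof (cases "k = 0")
  case True
  show ?thesis
    apply (rule exI[where x=0], rule exI[where x=1], rule exI[where x="-1"], rule exI[where x=2],
           rule exI[where x=0], rule exI[where x="1/2"], rule exI[where x="1/2"])
    apply (rule construction)
    using True by simp_all
next
  case False
  define du where "du = k / sqrt 3"
  have du2: "du\<^sup>2 = k\<^sup>2 / 3" by (simp add: du_def power_divide)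
  have du0: "du \<noteq> 0" using False by (simp add: du_def)
  show ?thesis
    apply (rule exI[where x=0], rule exI[where x=du], rule exI[where x=1], rule exI[where x=1],
           rule exI[where x=0], rule exI[where x="- 2 * k\<^sup>2 / 3"], rule exI[where x="2 * du"])
    apply (rule construction)
    using False du0 du2 by simp_all
qed

end
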